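(* Let $\mathbf U$ be a real $3\times 3$ positive-definite symmetric matrix. Let $\hat{\mathbf e}_1\in\mathbb R^3$ with $|\hat{\mathbf e}_1|=1$, define $\hat{\mathbf U}=(-\mathbf I+2\hat{\mathbf e}_1\otimes\hat{\mathbf e}_1)\mathbf U(-\mathbf I+2\hat{\mathbf e}_1\otimes\hat{\mathbf e}_1)$ and suppose $\hat{\mathbf U}\neq\mathbf U$. Then there exists a second unit vector $\hat{\mathbf e}_2$, not parallel to $\hat{\mathbf e}_1$, satisfying $\hat{\mathbf U}=(-\mathbf I+2\hat{\mathbf e}_2\otimes\hat{\mathbf e}_2)\mathbf U(-\mathbf I+2\hat{\mathbf e}_2\otimes\hat{\mathbf e}_2)$ if and only if $\hat{\mathbf e}_1$ is perpendicular to an eigenvector of $\mathbf U$. In the case that $\hat{\mathbf e}_1$ is perpendicular to an eigenvector of $\mathbf U$, such $\hat{\mathbf e}_2$ is unique up to sign and is perpendicular to both $\hat{\mathbf e}_1$ and that eigenvector. Moreover, suppose $\hat{\mathbf e}_1$ is perpendicular to an eigenvector $\mathbf v$ of $\mathbf U$ with $|\mathbf v|=1$, and put $\hat{\mathbf e}_2=\mathbf v\times\hat{\mathbf e}_1$. Then the two solutions $\mathbf a_C^1\otimes\mathbf n_C^1$, $\mathbf a_C^2\otimes\mathbf n_C^2$ (dyads $\mathbf a\otimes\mathbf n$, together with some $\hat{\mathbf R}\in\mathrm{SO}(3)$) of the equation $\hat{\mathbf R}\hat{\mathbf U}-\mathbf U=\mathbf a\otimes\mathbf n$ can be written $$\mathbf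 n_C^1=\hat{\mathbf e}_1,\quad \mathbf a_C^1=\xi\,\mathbf U\hat{\mathbf e}_2,\quad \xi=2\frac{\hat{\mathbf e}_2\cdot\mathbf U^{-2}\hat{\mathbf e}_1}{\hat{\mathbf e}_1\cdot\mathbf U^{-2}\hat{\mathbf e}_1},$$ $$\mathbf n_C^2=\hat{\mathbf e}_2,\quad \mathbf a_C^2=\eta\,\mathbf U\hat{\mathbf e}_1,\quad \eta=-2\frac{\hat{\mathbf e}_2\cdot\mathbf U^{2}\hat{\mathbf e}_1}{\hat{\mathbf e}_1\cdot\mathbf U^{2}\hat{\mathbf e}_1}.$$
   Context: For vectors $\mathbf a,\mathbf n\in\mathbb R^3$, $\mathbf a\otimes\mathbf n$ denotes the $3\times3$ matrix with $(\mathbf a\otimes\mathbf n)\mathbf x=(\mathbf n\cdot\mathbf x)\mathbf a$. $\mathrm{SO}(3)$ is the group of rotations. Solutions of $\hat{\mathbf R}\hat{\mathbf U}-\mathbf U=\mathbf a\otimes\mathbf n$ are counted as distinct only via the dyad $\mathbf a\otimes\mathbf n$ (rescaling $\mathbf a\to\rho\mathbf a$, $\mathbf n\to\mathbf n/\rho$ does not give a new solution). *)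

theory Defs
  imports "HOL-Analysis.Analysis" "HOL-Analysis.Cross3"
begin

definition dyad :: "real^3 \<Rightarrow> real^3 \<Rightarrow> real^3^3" where
  "dyad a n = (\<chi> i j. a $ i * n $ j)"

definition halfturn :: "real^3 \<Rightarrow> real^3^3" where
  "halfturn e = - mat 1 + 2 *\<^sub>R dyad e e"

definition sym_pos_def_matrix :: "real^3^3 \<Rightarrow> bool" where
  "sym_pos_def_matrix U \<longleftrightarrow> transpose U = U \<and> (\<forall>x. x \<noteq> 0 \<longrightarrow> x \<bullet> (U *v x) > 0)"

definition is_eigenvector :: "real^3^3 \<Rightarrow> real^3 \<Rightarrow> bool" where
  "is_eigenvector U v \<longleftrightarrow> v \<noteq> 0 \<and> (\<exists>c. U *v v = c *\<^sub>R v)"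

definition parallel :: "real^3 \<Rightarrow> real^3 \<Rightarrow> bool" where
  "parallel x y \<longleftrightarrow> (\<exists>c. x = c *\<^sub>R y \<or> y = c *\<^sub>R x)"

definition twin_solutions :: "real^3^3 \<Rightarrow> real^3^3 \<Rightarrow> (real^3^3) set" where
  "twin_solutions U Uh = {D. (\<exists>a n R. rotation_matrix R \<and> R ** Uh - U = dyad a n \<and> D = dyad a n)}"

end

theory Submission imports Defs begin

lemma sym_dot: assumes "transpose U = U" shows "(U *v x) \<bullet> y = x \<bullet> ((U::real^'n^'n) *v y)"
proof -
  have "U *v x = x v* U" using vector_transpose_matrix[of x U] assms by simp
  then show ?thesis by (simp add: dot_lmul_matrix)
qed

lemma ht_apply: "halfturn e *v x = (2 * (e \<bullet> x)) *\<^sub>R e - x"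
  by (simp add: halfturn_def dyad_def vec_eq_iff matrix_vector_mult_def inner_vec_def sum_3 mat_def algebra_simps forall_3)

lemma dyad_apply: "dyad a n *v x = (n \<bullet> x) *\<^sub>R a"
  by (simp add: dyad_def vec_eq_iff matrix_vector_mult_def inner_vec_def sum_3 algebra_simps forall_3)

lemma mv_minus: "((A::real^3^3) - B) *v x = A *v x - B *v x"
  by (simp add: vec_eq_iff matrix_vector_mult_def sum_3 algebra_simps)

lemma mv_mult: "((A::real^'n^'n) ** B) *v x = A *v (B *v x)"
  by (simp add: matrix_vector_mul_assoc)

lemma mv_add: "(A::real^'n^'n) *v (x + y) = A *v x + A *v y"
  by (simp add: matrix_vector_right_distrib)

lemma mv_diff: "(A::real^'n^'n) *v (x - y) = A *v x - A *v y"
  by (simp add: matrix_vector_mult_diff_distrib)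

lemma mv_scale: "(A::real^'n^'n) *v (a *\<^sub>R x) = a *\<^sub>R (A *v x)"
  by (simp add: matrix_vector_mult_scaleR)

lemma mv_neg: "(A::real^'n^'n) *v (- x) = - (A *v x)"
  using mv_scale[of A "-1" x] by simp

lemma poly6: "(2*(a*a) - 1)*(2*(b*b) - 1)*(2*(c*c) - 1) + (2*(a*b))*(2*(b*c))*(2*(c*a)) + (2*(a*c))*(2*(b*a))*(2*(c*b))
   - (2*(a*a) - 1)*(2*(b*c))*(2*(c*b)) - (2*(a*b))*(2*(b*a))*(2*(c*c) - 1) - (2*(a*c))*(2*(b*b) - 1)*(2*(c*a))
   = 2*(a*a + b*b + c*c) - (1::real)"
  by (simp add: algebra_simps)
lemma ht_entry: "halfturn e $ i $ j = 2 * (e$i * e$j) - (if i = j then 1 else 0)"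
  by (simp add: halfturn_def dyad_def mat_def)
lemma det_halfturn: assumes "norm e = 1" shows "det (halfturn e) = 1"
proof -
  have "e \<bullet> e = 1" using assms by (simp add: norm_eq_1)
  then have h: "e$1*e$1 + e$2*e$2 + e$3*e$3 = 1" by (simp add: inner_vec_def sum_3)
  have d: "((1::3) = 2) = False" "((1::3) = 3) = False" "((2::3) = 3) = False" "((2::3) = 1) = False" "((3::3) = 1) = False" "((3::3) = 2) = False" by simp_all
  have "det (halfturn e) = 2*(e$1*e$1 + e$2*e$2 + e$3*e$3) - 1"
    unfolding det_3 ht_entry d simp_thms(6) if_True if_False diff_zero by (rule poly6)
  then show ?thesis using h by simp
qed
lemma cross_cross: "cross3 (cross3 a b) y = (a \<bullet> y) *\<^sub>R b - (b \<bullet> y) *\<^sub>R a"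
  unfolding vec_eq_iff forall_3 by (simp add: cross3_def inner_vec_def sum_3) algebra

lemma transpose_halfturn: "transpose (halfturn e) = halfturn e"
  by (simp add: halfturn_def dyad_def vec_eq_iff transpose_def mat_def forall_3 mult.commute)

lemma halfturn_sq: assumes "norm e = 1" shows "halfturn e ** halfturn e = mat 1"
proof -
  have ee: "e \<bullet> e = 1" using assms by (simp add: norm_eq_1)
  show ?thesis unfolding matrix_eq
  proof
    fix x
    have h1: "e \<bullet> (halfturn e *v x) = e \<bullet> x" by (simp add: ht_apply inner_diff_right ee)
    have "halfturn e *v (halfturn e *v x) = (2*(e \<bullet> (halfturn e *v x))) *\<^sub>R e - halfturn e *v x"
      by (rule ht_apply)
    also have "\<dots> = x" unfolding h1 by (simp add: ht_apply)
    finally show "(halfturn e ** halfturn e) *v x = mat 1 *v x" by (simp add: mv_mult)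
  qed
qed

lemma rotation_halfturn: assumes "norm e = 1" shows "rotation_matrix (halfturn e)"
  unfolding rotation_matrix_def orthogonal_matrix
  using transpose_halfturn halfturn_sq[OF assms] det_halfturn[OF assms] by simp

lemma orth_dot: assumes "orthogonal_matrix R" shows "(R *v x) \<bullet> (R *v y) = x \<bullet> (y::real^'n)"
proof -
  have "(R *v x) \<bullet> (R *v y) = x \<bullet> (transpose R *v (R *v y))"
    using dot_lmul_matrix[of x "transpose R" "R *v y"] by simp
  also have "\<dots> = x \<bullet> y" using assms
    by (simp add: orthogonal_matrix mv_mult[symmetric])
  finally show ?thesis .
qed

lemma perp2:
  assumes "y \<bullet> a = 0" "y \<bullet> b = 0" "cross3 a b \<noteq> 0"
  shows "y = ((y \<bullet> cross3 a b) / (cross3 a b \<bullet> cross3 a b)) *\<^sub>R cross3 a b"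
proof -
  define c where "c = cross3 a b"
  have cy: "cross3 c y = 0" unfolding c_def cross_cross using assms
    by (simp add: inner_commute)
  have "(norm (cross3 c y))\<^sup>2 + (c \<bullet> y)\<^sup>2 = (norm c * norm y)\<^sup>2" by (rule norm_cross_dot)
  then have k: "(c \<bullet> y)^2 = (c \<bullet> c) * (y \<bullet> y)"
    by (simp add: cy power_mult_distrib power2_norm_eq_inner)
  have c0: "c \<bullet> c > 0" using assms(3) c_def by simp
  define t where "t = (y \<bullet> c) / (c \<bullet> c)"
  have "(y - t *\<^sub>R c) \<bullet> (y - t *\<^sub>R c) = y \<bullet> y - 2 * t * (y \<bullet> c) + t^2 * (c \<bullet> c)"
    by (simp add: inner_diff_left inner_diff_right inner_commute power2_eq_square algebra_simps)
  also have "\<dots> = 0" unfolding t_def using c0 k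
    by (simp add: field_simps power2_eq_square inner_commute)
  finally have "y - t *\<^sub>R c = 0" by simp
  then show ?thesis unfolding t_def c_def by simp
qed

lemma expand3:
  assumes ab: "a \<bullet> b = 0" and a0: "a \<noteq> 0" and b0: "b \<noteq> 0"
  shows "cross3 a b \<noteq> 0"
    and "x = ((x \<bullet> a)/(a \<bullet> a)) *\<^sub>R a + ((x \<bullet> b)/(b \<bullet> b)) *\<^sub>R b
           + ((x \<bullet> cross3 a b)/(cross3 a b \<bullet> cross3 a b)) *\<^sub>R cross3 a b"
proof -
  have "(norm (cross3 a b))\<^sup>2 + (a \<bullet> b)\<^sup>2 = (norm a * norm b)\<^sup>2" by (rule norm_cross_dot)
  then have "norm (cross3 a b) \<noteq> 0" using ab a0 b0 by simp
  then show c0: "cross3 a b \<noteq> 0" by simp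
  define y where "y = x - ((x \<bullet> a)/(a \<bullet> a)) *\<^sub>R a - ((x \<bullet> b)/(b \<bullet> b)) *\<^sub>R b"
  have ba: "b \<bullet> a = 0" using ab by (simp add: inner_commute)
  have ya: "y \<bullet> a = 0" unfolding y_def using a0 ab ba
    by (simp add: inner_diff_left)
  have yb: "y \<bullet> b = 0" unfolding y_def using b0 ab ba
    by (simp add: inner_diff_left)
  have yc: "y \<bullet> cross3 a b = x \<bullet> cross3 a b" unfolding y_def
    by (simp add: inner_diff_left dot_cross_self)
  from perp2[OF ya yb c0] yc show "x = ((x \<bullet> a)/(a \<bullet> a)) *\<^sub>R a + ((x \<bullet> b)/(b \<bullet> b)) *\<^sub>R b
           + ((x \<bullet> cross3 a b)/(cross3 a b \<bullet> cross3 a b)) *\<^sub>R cross3 a b"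
    unfolding y_def by (simp add: algebra_simps)
qed

lemma rot_unique:
  fixes R R' :: "real^3^3"
  assumes R: "rotation_matrix R" and R': "rotation_matrix R'"
    and ab: "a \<bullet> b = 0" and a0: "a \<noteq> 0" and b0: "b \<noteq> 0"
    and Ra: "R *v a = R' *v a" and Rb: "R *v b = R' *v b"
  shows "R = R'"
proof -
  have Rc: "R *v cross3 a b = R' *v cross3 a b"
    using cross_rotation_matrix[OF R, of a b] cross_rotation_matrix[OF R', of a b] Ra Rb by simp
  show ?thesis unfolding matrix_eq
  proof
    fix x
    have "x = ((x \<bullet> a)/(a \<bullet> a)) *\<^sub>R a + ((x \<bullet> b)/(b \<bullet> b)) *\<^sub>R b
           + ((x \<bullet> cross3 a b)/(cross3 a b \<bullet> cross3 a b)) *\<^sub>R cross3 a b"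
      by (rule expand3(2)[OF ab a0 b0])
    then have "R *v x = R *v (((x \<bullet> a)/(a \<bullet> a)) *\<^sub>R a + ((x \<bullet> b)/(b \<bullet> b)) *\<^sub>R b
           + ((x \<bullet> cross3 a b)/(cross3 a b \<bullet> cross3 a b)) *\<^sub>R cross3 a b)"
      and "R' *v x = R' *v (((x \<bullet> a)/(a \<bullet> a)) *\<^sub>R a + ((x \<bullet> b)/(b \<bullet> b)) *\<^sub>R b
           + ((x \<bullet> cross3 a b)/(cross3 a b \<bullet> cross3 a b)) *\<^sub>R cross3 a b)" by simp_all
    then show "R *v x = R' *v x"
      by (simp only: mv_add mv_scale Ra Rb Rc)
  qed
qed


lemma QUQ:
  assumes symU: "transpose U = U" and e: "norm e = 1"
  shows "(halfturn e ** U ** halfturn e) *v x = U *v x + (4*(e \<bullet> x)*(e \<bullet> (U *v e))) *\<^sub>R e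
          - (2*(e \<bullet> x)) *\<^sub>R (U *v e) - (2*((U *v e) \<bullet> x)) *\<^sub>R e"
proof -
  have s: "e \<bullet> (U *v x) = (U *v e) \<bullet> x" using sym_dot[OF symU] by simp
  have "(halfturn e ** U ** halfturn e) *v x = halfturn e *v (U *v (halfturn e *v x))"
    by (simp add: mv_mult)
  also have "\<dots> = (2 * (e \<bullet> x)) *\<^sub>R (halfturn e *v (U *v e)) - halfturn e *v (U *v x)"
    by (simp add: ht_apply mv_diff mv_scale)
  also have "\<dots> = (2 * (e \<bullet> x)) *\<^sub>R ((2 * (e \<bullet> (U *v e))) *\<^sub>R e - U *v e)
          - ((2 * ((U *v e) \<bullet> x)) *\<^sub>R e - U *v x)"
    by (simp add: ht_apply s)
  also have "\<dots> = U *v x + (4*(e \<bullet> x)*(e \<bullet> (U *v e))) *\<^sub>R e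
          - (2*(e \<bullet> x)) *\<^sub>R (U *v e) - (2*((U *v e) \<bullet> x)) *\<^sub>R e"
    by (simp add: scaleR_diff_right)
  finally show ?thesis .
qed

locale spd =
  fixes U :: "real^3^3"
  assumes symU: "transpose U = U" and pdU: "\<And>x. x \<noteq> 0 \<Longrightarrow> x \<bullet> (U *v x) > 0"
begin

lemma U_inj: "U *v x = 0 \<Longrightarrow> x = 0"
  using pdU[of x] by auto

lemma U_inv: "U ** matrix_inv U = mat 1 \<and> matrix_inv U ** U = mat 1"
proof -
  have "inj ((*v) U)"
  proof (rule injI)
    fix x y assume "U *v x = U *v y"
    then have "U *v (x - y) = 0" by (simp add: mv_diff)
    then have "x - y = 0" by (rule U_inj)
    then show "x = y" by simp
  qed
  then have "invertible U" using matrix_left_invertible_injective invertible_left_inverse by blast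
  then show ?thesis unfolding matrix_inv_def invertible_def by (rule someI_ex)
qed

lemma UUi: "U *v (matrix_inv U *v x) = x"
  using U_inv mv_mult[of U "matrix_inv U" x] by simp

lemma UiU: "matrix_inv U *v (U *v x) = x"
  using U_inv mv_mult[of "matrix_inv U" U x] by simp

lemma Usym: "(U *v x) \<bullet> y = x \<bullet> (U *v y)" by (rule sym_dot[OF symU])

lemma Ui_sym: "(matrix_inv U *v x) \<bullet> y = x \<bullet> (matrix_inv U *v y)"
proof -
  have "(matrix_inv U *v x) \<bullet> y = (matrix_inv U *v x) \<bullet> (U *v (matrix_inv U *v y))" by (simp add: UUi)
  also have "\<dots> = (U *v (matrix_inv U *v x)) \<bullet> (matrix_inv U *v y)" by (rule Usym[symmetric])
  also have "\<dots> = x \<bullet> (matrix_inv U *v y)" by (simp add: UUi)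
  finally show ?thesis .
qed

lemma typeI:
  assumes e: "norm e = 1"
  shows "\<exists>R. rotation_matrix R \<and> R ** (halfturn e ** U ** halfturn e) - U
     = dyad (2 *\<^sub>R ((1/((matrix_inv U *v e) \<bullet> (matrix_inv U *v e))) *\<^sub>R (matrix_inv U *v e) - U *v e)) e"
proof -
  define c where "c = matrix_inv U *v e"
  have Uc: "U *v c = e" unfolding c_def by (simp add: UUi)
  have c0: "c \<noteq> 0" using Uc e by auto
  define k where "k = (1/norm c) *\<^sub>R c"
  have k: "norm k = 1" unfolding k_def using c0 by simp
  define Q where "Q = halfturn e"
  define R where "R = halfturn k ** Q"
  have rot: "rotation_matrix R" unfolding R_def Q_def
    using rotation_halfturn[OF k] rotation_halfturn[OF e]
    by (simp add: rotation_matrix_def orthogonal_matrix_mul det_mul)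
  have QQ: "Q *v (Q *v y) = y" for y unfolding Q_def using halfturn_sq[OF e]
    using mv_mult[of "halfturn e" "halfturn e" y] by simp
  have cU: "c \<bullet> (U *v y) = e \<bullet> y" for y by (simp add: Usym[symmetric] Uc)
  have ee: "e \<bullet> e = 1" using e by (simp add: norm_eq_1)
  have cc: "norm c * norm c = c \<bullet> c" by (simp add: norm_eq_sqrt_inner)
  have eq: "(R ** (Q ** U ** Q) - U) *v x
     = dyad (2 *\<^sub>R ((1/(c \<bullet> c)) *\<^sub>R c - U *v e)) e *v x" for x
  proof -
    define z where "z = U *v (Q *v x)"
    have z: "z = (2*(e \<bullet> x)) *\<^sub>R (U *v e) - U *v x"
      unfolding z_def Q_def by (simp add: ht_apply mv_diff mv_scale)
    have cz: "c \<bullet> z = e \<bullet> x" unfolding z by (simp add: inner_diff_right cU ee)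
    have "(R ** (Q ** U ** Q) - U) *v x = halfturn k *v z - U *v x"
      by (simp add: mv_minus mv_mult R_def QQ z_def)
    also have "\<dots> = (2 * (k \<bullet> z)) *\<^sub>R k - z - U *v x" by (simp add: ht_apply)
    also have "(2 * (k \<bullet> z)) *\<^sub>R k = (2 * (e \<bullet> x) / (c \<bullet> c)) *\<^sub>R c"
      unfolding k_def using cz cc by (simp add: field_simps)
    finally show ?thesis unfolding z dyad_apply
      by (simp add: scaleR_diff_right algebra_simps)
  qed
  show ?thesis
    apply (rule exI[of _ R])
    using rot eq unfolding matrix_eq Q_def c_def by simp
qed

end

lemma gen1:
  fixes X E F V :: "'a::real_vector"
  assumes "V = pp *\<^sub>R E + qq *\<^sub>R F" "c = pp*a + qq*b"
  shows "X + (4*a*pp) *\<^sub>R E - (2*a) *\<^sub>R V - (2*c) *\<^sub>R E = X - (2*qq) *\<^sub>R (a *\<^sub>R F + b *\<^sub>R E)"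
  unfolding assms apply (simp add: algebra_simps)
  apply (simp only: scaleR_add_left[symmetric])
  apply simp
  done

lemma gen2:
  fixes X E F V :: "'a::real_vector"
  assumes "V = qq *\<^sub>R E + rr *\<^sub>R F" "c = qq*a + rr*b"
  shows "X + (4*b*rr) *\<^sub>R F - (2*b) *\<^sub>R V - (2*c) *\<^sub>R F = X - (2*qq) *\<^sub>R (a *\<^sub>R F + b *\<^sub>R E)"
  unfolding assms apply (simp add: algebra_simps)
  apply (simp only: scaleR_add_left[symmetric])
  apply simp
  done

locale frame = spd +
  fixes e1 w :: "real^3" and lam :: real
  assumes e1: "norm e1 = 1" and w: "norm w = 1" and e1w: "e1 \<bullet> w = 0"
    and Uw: "U *v w = lam *\<^sub>R w"
begin

abbreviation "ff \<equiv> cross3 w e1"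
definition "p = e1 \<bullet> (U *v e1)"
definition "q = ff \<bullet> (U *v e1)"
definition "r = ff \<bullet> (U *v ff)"
abbreviation "Uh \<equiv> halfturn e1 ** U ** halfturn e1"

lemma we1: "w \<bullet> e1 = 0" using e1w by (simp add: inner_commute)
lemma e1e1: "e1 \<bullet> e1 = 1" using e1 by (simp add: norm_eq_1)
lemma ww: "w \<bullet> w = 1" using w by (simp add: norm_eq_1)
lemma fw: "ff \<bullet> w = 0" "w \<bullet> ff = 0" by (simp_all add: dot_cross_self)
lemma fe1: "ff \<bullet> e1 = 0" "e1 \<bullet> ff = 0" by (simp_all add: dot_cross_self)
lemma ff: "ff \<bullet> ff = 1"
proof -
  have "(norm ff)\<^sup>2 + (w \<bullet> e1)\<^sup>2 = (norm w * norm e1)\<^sup>2" by (rule norm_cross_dot)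
  then show ?thesis using we1 w e1 by (simp add: power2_norm_eq_inner)
qed
lemma ffn: "norm ff = 1" using ff by (simp add: norm_eq_1)
lemma w0: "w \<noteq> 0" using w by auto
lemma e10: "e1 \<noteq> 0" using e1 by auto

lemma expand: "x = (x \<bullet> w) *\<^sub>R w + (x \<bullet> e1) *\<^sub>R e1 + (x \<bullet> ff) *\<^sub>R ff"
  using expand3(2)[OF we1 w0 e10, of x] ww e1e1 ff by simp

lemma lam_pos: "lam > 0"
  using pdU[OF w0] Uw ww by simp

lemma Ue1: "U *v e1 = p *\<^sub>R e1 + q *\<^sub>R ff"
proof -
  have "(U *v e1) \<bullet> w = 0" by (simp add: Usym Uw e1w)
  then show ?thesis using expand[of "U *v e1"] by (simp add: inner_commute p_def q_def)
qed

lemma Uf: "U *v ff = q *\<^sub>R e1 + r *\<^sub>R ff"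
proof -
  have "(U *v ff) \<bullet> w = 0" by (simp add: Usym Uw fw)
  moreover have "(U *v ff) \<bullet> e1 = q" unfolding q_def by (rule Usym)
  ultimately show ?thesis using expand[of "U *v ff"] by (simp add: inner_commute r_def)
qed

lemma p_pos: "p > 0" unfolding p_def using pdU[OF e10] .
lemma r_pos: "r > 0"
proof -
  have "ff \<noteq> 0" using ff by auto
  then show ?thesis unfolding r_def using pdU by blast
qed

lemma Ux_f: "(U *v x) \<bullet> ff = q * (e1 \<bullet> x) + r * (ff \<bullet> x)"
proof -
  have "(U *v x) \<bullet> ff = x \<bullet> (U *v ff)" by (rule Usym)
  also have "\<dots> = q * (x \<bullet> e1) + r * (x \<bullet> ff)" by (simp add: Uf inner_add_right)
  finally show ?thesis by (simp add: inner_commute)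
qed

lemma Ux_e1: "(U *v x) \<bullet> e1 = p * (e1 \<bullet> x) + q * (ff \<bullet> x)"
proof -
  have "(U *v x) \<bullet> e1 = x \<bullet> (U *v e1)" by (rule Usym)
  also have "\<dots> = p * (x \<bullet> e1) + q * (x \<bullet> ff)" by (simp add: Ue1 inner_add_right)
  finally show ?thesis by (simp add: inner_commute)
qed

lemma Uh_apply: "Uh *v x = U *v x - (2*q) *\<^sub>R ((e1 \<bullet> x) *\<^sub>R ff + (ff \<bullet> x) *\<^sub>R e1)"
proof -
  have "(U *v e1) \<bullet> x = e1 \<bullet> (U *v x)" by (rule Usym)
  also have "\<dots> = (U *v x) \<bullet> e1" by (rule inner_commute)
  also have "\<dots> = p * (e1 \<bullet> x) + q * (ff \<bullet> x)" by (rule Ux_e1)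
  finally have c: "(U *v e1) \<bullet> x = p * (e1 \<bullet> x) + q * (ff \<bullet> x)" .
  show ?thesis unfolding QUQ[OF symU e1] p_def[symmetric] by (rule gen1[OF Ue1 c])
qed

lemma Uh_f: "halfturn ff ** U ** halfturn ff = Uh"
proof -
  have a: "(U *v ff) \<bullet> x = q * (e1 \<bullet> x) + r * (ff \<bullet> x)" for x
  proof -
    have "(U *v ff) \<bullet> x = ff \<bullet> (U *v x)" by (rule Usym)
    also have "\<dots> = (U *v x) \<bullet> ff" by (rule inner_commute)
    also have "\<dots> = q * (e1 \<bullet> x) + r * (ff \<bullet> x)" by (rule Ux_f)
    finally show ?thesis .
  qed
  show ?thesis unfolding matrix_eq
  proof
    fix x
    have "(halfturn ff ** U ** halfturn ff) *v x = U *v x - (2*q) *\<^sub>R ((e1 \<bullet> x) *\<^sub>R ff + (ff \<bullet> x) *\<^sub>R e1)"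
      unfolding QUQ[OF symU ffn] r_def[symmetric] by (rule gen2[OF Uf a])
    then show "(halfturn ff ** U ** halfturn ff) *v x = Uh *v x" by (simp only: Uh_apply)
  qed
qed

lemma q_ne: assumes "Uh \<noteq> U" shows "q \<noteq> 0"
proof
  assume "q = 0"
  then have "Uh *v x = U *v x" for x by (simp add: Uh_apply)
  then have "Uh = U" by (simp add: matrix_eq)
  then show False using assms by simp
qed

lemma Uh_norm: "(Uh *v x) \<bullet> (Uh *v x) = (U *v x) \<bullet> (U *v x) - 4*q*(p+r)*(e1 \<bullet> x)*(ff \<bullet> x)"
proof -
  define X where "X = U *v x"
  define al where "al = e1 \<bullet> x"
  define be where "be = ff \<bullet> x"
  define Z where "Z = al *\<^sub>R ff + be *\<^sub>R e1"
  have XZ: "X \<bullet> Z = al * (q * al + r * be) + be * (p * al + q * be)"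
    unfolding Z_def X_def al_def be_def by (simp add: inner_add_right Ux_f Ux_e1)
  have ZZ: "Z \<bullet> Z = al * al + be * be"
    unfolding Z_def by (simp add: inner_add_left inner_add_right ff fe1 e1e1)
  have "(Uh *v x) \<bullet> (Uh *v x) = (X - (2*q) *\<^sub>R Z) \<bullet> (X - (2*q) *\<^sub>R Z)"
    unfolding Uh_apply X_def Z_def al_def be_def by simp
  also have "\<dots> = X \<bullet> X - 4*q*(X \<bullet> Z) + 4*q*q*(Z \<bullet> Z)"
    by (simp add: inner_diff_left inner_diff_right inner_commute[of Z X] algebra_simps)
  also have "\<dots> = X \<bullet> X - 4*q*(p+r)*al*be" unfolding XZ ZZ by (simp add: algebra_simps)
  finally show ?thesis unfolding X_def al_def be_def .
qed

end

lemma fwd: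
  assumes symU: "transpose U = U" and e1: "norm e1 = 1" and e2: "norm e2 = 1"
    and np: "\<not> parallel e2 e1"
    and eq: "halfturn e2 ** U ** halfturn e2 = halfturn e1 ** U ** halfturn e1"
  shows "\<exists>v. is_eigenvector U v \<and> e1 \<bullet> v = 0"
proof -
  define w0 where "w0 = cross3 e1 e2"
  have w00: "w0 \<noteq> 0"
  proof
    assume "w0 = 0"
    then have "collinear {0, e1, e2}" unfolding w0_def by (simp add: cross_eq_0)
    then have "e1 = 0 \<or> e2 = 0 \<or> (\<exists>c. e2 = c *\<^sub>R e1)" by (simp add: collinear_lemma)
    then show False using e1 e2 np unfolding parallel_def by auto
  qed
  have h1: "halfturn e1 *v w0 = - w0" unfolding w0_def by (simp add: ht_apply dot_cross_self)
  have h2: "halfturn e2 *v w0 = - w0" unfolding w0_def by (simp add: ht_apply dot_cross_self)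
  define y where "y = U *v w0"
  have "(halfturn e2 ** U ** halfturn e2) *v w0 = (halfturn e1 ** U ** halfturn e1) *v w0"
    using eq by simp
  then have "halfturn e2 *v y = halfturn e1 *v y"
    by (simp add: mv_mult h1 h2 mv_neg y_def)
  then have "(2*(e2 \<bullet> y)) *\<^sub>R e2 - y = (2*(e1 \<bullet> y)) *\<^sub>R e1 - y" by (simp only: ht_apply)
  then have "(2*(e2 \<bullet> y)) *\<^sub>R e2 = (2*(e1 \<bullet> y)) *\<^sub>R e1" by simp
  then have "(2::real) *\<^sub>R ((e2 \<bullet> y) *\<^sub>R e2) = (2::real) *\<^sub>R ((e1 \<bullet> y) *\<^sub>R e1)" by (simp only: scaleR_scaleR)
  then have yy: "(e2 \<bullet> y) *\<^sub>R e2 = (e1 \<bullet> y) *\<^sub>R e1" by (rule scaleR_left_imp_eq[rotated]) simp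
  have ye1: "e1 \<bullet> y = 0"
  proof (rule ccontr)
    assume ne: "e1 \<bullet> y \<noteq> 0"
    have "e1 = (1 / (e1 \<bullet> y)) *\<^sub>R ((e1 \<bullet> y) *\<^sub>R e1)" using ne by simp
    also have "\<dots> = (1 / (e1 \<bullet> y)) *\<^sub>R ((e2 \<bullet> y) *\<^sub>R e2)" using yy by simp
    also have "\<dots> = ((e2 \<bullet> y) / (e1 \<bullet> y)) *\<^sub>R e2" by simp
    finally have "e1 = ((e2 \<bullet> y) / (e1 \<bullet> y)) *\<^sub>R e2" .
    then show False using np unfolding parallel_def by blast
  qed
  have ye2: "e2 \<bullet> y = 0" using yy ye1 e2 by auto
  have "y = ((y \<bullet> w0) / (w0 \<bullet> w0)) *\<^sub>R w0"
    unfolding w0_def by (rule perp2) (use ye1 ye2 w00 w0_def in \<open>simp_all add: inner_commute\<close>)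
  then have "is_eigenvector U w0" unfolding is_eigenvector_def y_def using w00 by blast
  moreover have "e1 \<bullet> w0 = 0" unfolding w0_def by (simp add: dot_cross_self)
  ultimately show ?thesis by blast
qed

context frame begin

lemma part2:
  assumes ne: "Uh \<noteq> U" and e2: "norm e2 = 1" and np: "\<not> parallel e2 e1"
    and eq: "halfturn e2 ** U ** halfturn e2 = Uh"
  shows "e2 = ff \<or> e2 = - ff"
proof -
  have q: "q \<noteq> 0" using q_ne[OF ne] .
  define al where "al = e2 \<bullet> e1"
  define be where "be = e2 \<bullet> ff"
  define ga where "ga = e2 \<bullet> w"
  have e2x: "e2 = ga *\<^sub>R w + al *\<^sub>R e1 + be *\<^sub>R ff"
    unfolding al_def be_def ga_def by (rule expand)
  have key: "q *\<^sub>R ((e1 \<bullet> x) *\<^sub>R ff + (ff \<bullet> x) *\<^sub>R e1) = ((U *v e2) \<bullet> x) *\<^sub>R e2"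
    if x: "e2 \<bullet> x = 0" for x
  proof -
    have "(halfturn e2 ** U ** halfturn e2) *v x = Uh *v x" using eq by simp
    then have "U *v x - (2*((U *v e2) \<bullet> x)) *\<^sub>R e2 = U *v x - (2*q) *\<^sub>R ((e1 \<bullet> x) *\<^sub>R ff + (ff \<bullet> x) *\<^sub>R e1)"
      unfolding QUQ[OF symU e2] Uh_apply using x by simp
    then have "(2*((U *v e2) \<bullet> x)) *\<^sub>R e2 = (2*q) *\<^sub>R ((e1 \<bullet> x) *\<^sub>R ff + (ff \<bullet> x) *\<^sub>R e1)"
      by simp
    then have "(2::real) *\<^sub>R (((U *v e2) \<bullet> x) *\<^sub>R e2) = (2::real) *\<^sub>R (q *\<^sub>R ((e1 \<bullet> x) *\<^sub>R ff + (ff \<bullet> x) *\<^sub>R e1))"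
      by (simp only: scaleR_scaleR)
    then have "((U *v e2) \<bullet> x) *\<^sub>R e2 = q *\<^sub>R ((e1 \<bullet> x) *\<^sub>R ff + (ff \<bullet> x) *\<^sub>R e1)"
      by (rule scaleR_left_imp_eq[rotated]) simp
    then show ?thesis by (rule sym)
  qed
  have ga0: "ga = 0"
  proof (rule ccontr)
    assume g: "ga \<noteq> 0"
    define x where "x = ga *\<^sub>R e1 - al *\<^sub>R w"
    have "e2 \<bullet> x = 0" unfolding x_def al_def ga_def by (simp add: inner_diff_right)
    from key[OF this] have k: "(q * ga) *\<^sub>R ff = ((U *v e2) \<bullet> x) *\<^sub>R e2"
      unfolding x_def by (simp add: inner_diff_right e1e1 e1w fe1 fw)
    from arg_cong[OF k, of "\<lambda>v. v \<bullet> w"] have "((U *v e2) \<bullet> x) * ga = 0"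
      by (simp add: fw ga_def)
    then have "(U *v e2) \<bullet> x = 0" using g by simp
    with k have "(q * ga) *\<^sub>R ff = 0" by simp
    then show False using q g ff by auto
  qed
  have al0: "al = 0 \<and> be \<noteq> 0"
  proof -
    have be0: "be \<noteq> 0"
    proof
      assume "be = 0"
      then have "e2 = al *\<^sub>R e1" using e2x ga0 by simp
      then show False using np unfolding parallel_def by blast
    qed
    define x where "x = be *\<^sub>R e1 - al *\<^sub>R ff"
    have "e2 \<bullet> x = 0" unfolding x_def al_def be_def by (simp add: inner_diff_right)
    from key[OF this] have k: "q *\<^sub>R (be *\<^sub>R ff - al *\<^sub>R e1) = ((U *v e2) \<bullet> x) *\<^sub>R e2"
      unfolding x_def by (simp add: inner_diff_right e1e1 ff fe1)
    define m where "m = (U *v e2) \<bullet> x"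
    from arg_cong[OF k, of "\<lambda>v. v \<bullet> e1"] have k1: "- q * al = m * al"
      by (simp add: inner_diff_left fe1 e1e1 al_def m_def)
    from arg_cong[OF k, of "\<lambda>v. v \<bullet> ff"] have k2: "q * be = m * be"
      by (simp add: inner_diff_left fe1 ff be_def m_def)
    have "m = q" using k2 be0 by simp
    then have "al = 0" using k1 q by (simp add: algebra_simps)
    then show ?thesis using be0 by simp
  qed
  then have e2b: "e2 = be *\<^sub>R ff" using e2x ga0 by simp
  have "e2 \<bullet> e2 = 1" using e2 by (simp add: norm_eq_1)
  then have "be * be = 1" using e2b ff by simp
  then have "be = 1 \<or> be = -1" by (simp only: square_eq_1_iff)
  then show ?thesis using e2b by auto
qed

end

lemma gen3:
  fixes a b :: "'a::real_vector"
  shows "(qq *\<^sub>R a + rr *\<^sub>R b) - (2*qq) *\<^sub>R (0 *\<^sub>R b + 1 *\<^sub>R a) = (-qq) *\<^sub>R a + rr *\<^sub>R b"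
  apply (simp add: algebra_simps)
  apply (simp only: mult_2 mult_2_right scaleR_add_left)
  done

lemma gen4:
  fixes a b :: "'a::real_vector"
  shows "(pp *\<^sub>R a + qq *\<^sub>R b) - (2*qq) *\<^sub>R (1 *\<^sub>R b + 0 *\<^sub>R a) = pp *\<^sub>R a - qq *\<^sub>R b"
  apply (simp add: algebra_simps)
  apply (simp only: mult_2 mult_2_right scaleR_add_left)
  done

context frame begin

lemma Uh_w: "Uh *v w = lam *\<^sub>R w" by (simp add: Uh_apply Uw e1w fw)
lemma Uh_ff: "Uh *v ff = (-q) *\<^sub>R e1 + r *\<^sub>R ff"
  unfolding Uh_apply Uf fe1(2) ff by (rule gen3)
lemma Uh_e1: "Uh *v e1 = p *\<^sub>R e1 - q *\<^sub>R ff"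
  unfolding Uh_apply Ue1 fe1(1) e1e1 by (rule gen4)

lemma part3sub:
  assumes ne: "Uh \<noteq> U" and R: "rotation_matrix R" and Rd: "R ** Uh - U = dyad a n"
    and R1: "rotation_matrix R1" and R1d: "R1 ** Uh - U = dyad a1 e1"
    and R2: "rotation_matrix R2" and R2d: "R2 ** Uh - U = dyad a2 ff"
  shows "dyad a n = dyad a1 e1 \<or> dyad a n = dyad a2 ff"
proof -
  have q: "q \<noteq> 0" using q_ne[OF ne] .
  have pr: "p + r > 0" using p_pos r_pos by simp
  have app: "R *v (Uh *v x) = U *v x + (n \<bullet> x) *\<^sub>R a" for x
  proof -
    have "(R ** Uh - U) *v x = dyad a n *v x" using Rd by simp
    then show ?thesis by (simp add: mv_minus mv_mult dyad_apply algebra_simps)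
  qed
  have app1: "R1 *v (Uh *v x) = U *v x + (e1 \<bullet> x) *\<^sub>R a1" for x
  proof -
    have "(R1 ** Uh - U) *v x = dyad a1 e1 *v x" using R1d by simp
    then show ?thesis by (simp add: mv_minus mv_mult dyad_apply algebra_simps)
  qed
  have app2: "R2 *v (Uh *v x) = U *v x + (ff \<bullet> x) *\<^sub>R a2" for x
  proof -
    have "(R2 ** Uh - U) *v x = dyad a2 ff *v x" using R2d by simp
    then show ?thesis by (simp add: mv_minus mv_mult dyad_apply algebra_simps)
  qed
  have oR: "orthogonal_matrix R" using R by (simp add: rotation_matrix_def)
  have Z0: "(e1 \<bullet> x) * (ff \<bullet> x) = 0" if "(n \<bullet> x) *\<^sub>R a = 0" for x
  proof -
    have "(Uh *v x) \<bullet> (Uh *v x) = (R *v (Uh *v x)) \<bullet> (R *v (Uh *v x))" using orth_dot[OF oR] by simp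
    also have "\<dots> = (U *v x) \<bullet> (U *v x)" using app[of x] that by simp
    finally have "4*q*(p+r)*(e1 \<bullet> x)*(ff \<bullet> x) = 0" using Uh_norm[of x] by simp
    then show ?thesis using q pr by simp
  qed
  have a0: "a \<noteq> 0"
  proof
    assume "a = 0"
    then have "(e1 \<bullet> (e1 + ff)) * (ff \<bullet> (e1 + ff)) = 0" using Z0 by simp
    then show False by (simp add: inner_add_right e1e1 ff fe1)
  qed
  have Z: "(e1 \<bullet> x) * (ff \<bullet> x) = 0" if "n \<bullet> x = 0" for x using Z0 that by simp
  define n1 where "n1 = n \<bullet> e1"
  define n2 where "n2 = n \<bullet> ff"
  define n3 where "n3 = n \<bullet> w"
  have n12: "n1 = 0 \<or> n2 = 0"
  proof (rule ccontr)
    assume "\<not> (n1 = 0 \<or> n2 = 0)"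
    moreover have "(e1 \<bullet> (n2 *\<^sub>R e1 - n1 *\<^sub>R ff)) * (ff \<bullet> (n2 *\<^sub>R e1 - n1 *\<^sub>R ff)) = 0"
      by (rule Z) (simp add: inner_diff_right n1_def n2_def)
    ultimately show False by (simp add: inner_diff_right e1e1 ff fe1)
  qed
  have n3: "n3 = 0"
  proof (cases "n1 = 0")
    case True
    have "(e1 \<bullet> (e1 + n3 *\<^sub>R ff - n2 *\<^sub>R w)) * (ff \<bullet> (e1 + n3 *\<^sub>R ff - n2 *\<^sub>R w)) = 0"
      by (rule Z) (use True in \<open>simp add: inner_diff_right inner_add_right n1_def n2_def n3_def\<close>)
    then show ?thesis by (simp add: inner_diff_right inner_add_right e1e1 ff fe1 fw e1w)
  next
    case False
    then have n2: "n2 = 0" using n12 by simp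
    have "(e1 \<bullet> (n3 *\<^sub>R e1 + ff - n1 *\<^sub>R w)) * (ff \<bullet> (n3 *\<^sub>R e1 + ff - n1 *\<^sub>R w)) = 0"
      by (rule Z) (use n2 in \<open>simp add: inner_diff_right inner_add_right n1_def n2_def n3_def\<close>)
    then show ?thesis by (simp add: inner_diff_right inner_add_right e1e1 ff fe1 fw e1w)
  qed
  have lw: "lam *\<^sub>R w \<noteq> 0" using lam_pos w0 by simp
  show ?thesis
  proof (cases "n2 = 0")
    case True
    have ff0: "(-q) *\<^sub>R e1 + r *\<^sub>R ff \<noteq> 0"
    proof
      assume "(-q) *\<^sub>R e1 + r *\<^sub>R ff = 0"
      then have "((-q) *\<^sub>R e1 + r *\<^sub>R ff) \<bullet> ff = 0" by simp
      then have "(-q) * (e1 \<bullet> ff) + r * (ff \<bullet> ff) = 0" by (simp only: inner_add_left inner_scaleR_left)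
      then show False using r_pos by (simp add: fe1 ff)
    qed
    have "R = R1"
    proof (rule rot_unique[OF R R1 _ lw ff0])
      show "(lam *\<^sub>R w) \<bullet> ((-q) *\<^sub>R e1 + r *\<^sub>R ff) = 0" by (simp add: inner_add_right inner_diff_right we1 fw)
      show "R *v (lam *\<^sub>R w) = R1 *v (lam *\<^sub>R w)"
        using app[of w] app1[of w] n3 by (simp add: Uh_w n3_def e1w)
      show "R *v ((-q) *\<^sub>R e1 + r *\<^sub>R ff) = R1 *v ((-q) *\<^sub>R e1 + r *\<^sub>R ff)"
        using app[of ff] app1[of ff] True by (simp add: Uh_ff n2_def fe1)
    qed
    then show ?thesis using Rd R1d by simp
  next
    case False
    then have n1: "n1 = 0" using n12 by simp
    have e0: "p *\<^sub>R e1 - q *\<^sub>R ff \<noteq> 0"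
    proof
      assume "p *\<^sub>R e1 - q *\<^sub>R ff = 0"
      then have "(p *\<^sub>R e1 - q *\<^sub>R ff) \<bullet> e1 = 0" by simp
      then show False using p_pos by (simp add: inner_diff_left fe1 e1e1)
    qed
    have "R = R2"
    proof (rule rot_unique[OF R R2 _ lw e0])
      show "(lam *\<^sub>R w) \<bullet> (p *\<^sub>R e1 - q *\<^sub>R ff) = 0" by (simp add: inner_diff_right we1 fw)
      show "R *v (lam *\<^sub>R w) = R2 *v (lam *\<^sub>R w)"
        using app[of w] app2[of w] n3 by (simp add: Uh_w n3_def fw)
      show "R *v (p *\<^sub>R e1 - q *\<^sub>R ff) = R2 *v (p *\<^sub>R e1 - q *\<^sub>R ff)"
        using app[of e1] app2[of e1] n1 by (simp add: Uh_e1 n1_def fe1)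
    qed
    then show ?thesis using Rd R2d by simp
  qed
qed

end

context frame begin

abbreviation "Ui \<equiv> matrix_inv U"

lemma Uiw: "Ui *v w = (1/lam) *\<^sub>R w"
proof -
  have "w = Ui *v (U *v w)" by (simp add: UiU)
  also have "\<dots> = lam *\<^sub>R (Ui *v w)" by (simp add: Uw mv_scale)
  finally have "(1/lam) *\<^sub>R w = (1/lam) *\<^sub>R (lam *\<^sub>R (Ui *v w))" by (rule arg_cong)
  then show ?thesis using lam_pos by simp
qed

lemma Ui_perp: "(Ui *v x) \<bullet> w = 0 \<longleftrightarrow> x \<bullet> w = 0"
  using lam_pos by (simp add: Ui_sym Uiw)

lemma a1_eq:
  "2 *\<^sub>R ((1/((Ui *v e1) \<bullet> (Ui *v e1))) *\<^sub>R (Ui *v e1) - U *v e1)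
   = (2 * (ff \<bullet> (Ui ** Ui *v e1)) / (e1 \<bullet> (Ui ** Ui *v e1))) *\<^sub>R (U *v ff)"
proof -
  define c where "c = Ui *v e1"
  define s where "s = c \<bullet> c"
  have c0: "c \<noteq> 0" unfolding c_def using UUi[of e1] e10 by auto
  have s0: "s > 0" unfolding s_def using c0 by simp
  have s': "e1 \<bullet> (Ui *v c) = s" unfolding s_def by (simp add: Ui_sym[symmetric] c_def)
  define y where "y = 2 *\<^sub>R ((1/s) *\<^sub>R (Ui *v c) - e1)"
  have Uy: "U *v y = 2 *\<^sub>R ((1/s) *\<^sub>R c - U *v e1)"
    unfolding y_def by (simp add: mv_scale mv_diff UUi)
  have ye1: "y \<bullet> e1 = 0" unfolding y_def using s0 s'
    by (simp add: inner_diff_left inner_diff_right e1e1 inner_commute)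
  have cw: "c \<bullet> w = 0" unfolding c_def using Ui_perp e1w by simp
  have yw: "y \<bullet> w = 0" unfolding y_def using Ui_perp cw
    by (simp add: inner_diff_left e1w)
  have "y = (y \<bullet> ff) *\<^sub>R ff" using expand[of y] ye1 yw by simp
  then have "U *v y = U *v ((y \<bullet> ff) *\<^sub>R ff)" by (rule arg_cong)
  also have "\<dots> = (y \<bullet> ff) *\<^sub>R (U *v ff)" by (rule mv_scale)
  finally have "U *v y = (y \<bullet> ff) *\<^sub>R (U *v ff)" .
  moreover have "y \<bullet> ff = 2 * (ff \<bullet> (Ui ** Ui *v e1)) / (e1 \<bullet> (Ui ** Ui *v e1))"
    unfolding y_def using s' by (simp add: mv_mult c_def[symmetric] inner_diff_left inner_diff_right fe1 inner_commute)
  ultimately show ?thesis using Uy unfolding c_def s_def by simp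
qed

lemma a2_eq:
  "2 *\<^sub>R ((1/((Ui *v ff) \<bullet> (Ui *v ff))) *\<^sub>R (Ui *v ff) - U *v ff)
   = (- 2 * (ff \<bullet> (U ** U *v e1)) / (e1 \<bullet> (U ** U *v e1))) *\<^sub>R (U *v e1)"
proof -
  define d where "d = Ui *v ff"
  define t where "t = d \<bullet> d"
  have f0: "ff \<noteq> 0" using ff by auto
  have d0: "d \<noteq> 0" unfolding d_def using UUi[of ff] f0 by auto
  have t0: "t > 0" unfolding t_def using d0 by simp
  have t': "ff \<bullet> (Ui *v d) = t" unfolding t_def by (simp add: Ui_sym[symmetric] d_def)
  define y where "y = 2 *\<^sub>R ((1/t) *\<^sub>R (Ui *v d) - ff)"
  have Uy: "U *v y = 2 *\<^sub>R ((1/t) *\<^sub>R d - U *v ff)"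
    unfolding y_def by (simp add: mv_scale mv_diff UUi)
  have UUy: "U *v (U *v y) = 2 *\<^sub>R ((1/t) *\<^sub>R ff - U *v (U *v ff))"
    unfolding Uy by (simp add: mv_scale mv_diff UUi d_def)
  have yf: "y \<bullet> ff = 0" unfolding y_def using t0 t'
    by (simp add: inner_diff_left inner_diff_right ff inner_commute)
  have dw: "d \<bullet> w = 0" unfolding d_def using Ui_perp fw by simp
  have yw: "y \<bullet> w = 0" unfolding y_def using Ui_perp dw
    by (simp add: inner_diff_left fw)
  define k where "k = y \<bullet> e1"
  have yk: "y = k *\<^sub>R e1" using expand[of y] yf yw k_def by simp
  then have "U *v y = U *v (k *\<^sub>R e1)" by (rule arg_cong)
  then have Uyk: "U *v y = k *\<^sub>R (U *v e1)" by (simp only: mv_scale)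
  then have "U *v (U *v y) = U *v (k *\<^sub>R (U *v e1))" by (rule arg_cong)
  then have "U *v (U *v y) = k *\<^sub>R (U *v (U *v e1))" by (simp only: mv_scale)
  then have "e1 \<bullet> (2 *\<^sub>R ((1/t) *\<^sub>R ff - U *v (U *v ff))) = k * (e1 \<bullet> (U *v (U *v e1)))"
    using UUy by simp
  then have eq: "- 2 * (e1 \<bullet> (U *v (U *v ff))) = k * (e1 \<bullet> (U *v (U *v e1)))"
    by (simp add: inner_diff_right fe1)
  have "e1 \<bullet> (U *v (U *v ff)) = (U *v e1) \<bullet> (U *v ff)" by (rule Usym[symmetric])
  also have "\<dots> = (U *v ff) \<bullet> (U *v e1)" by (rule inner_commute)
  also have "\<dots> = ff \<bullet> (U *v (U *v e1))" by (rule Usym)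
  finally have A: "e1 \<bullet> (U *v (U *v ff)) = ff \<bullet> (U *v (U *v e1))" .
  have B: "e1 \<bullet> (U *v (U *v e1)) = (U *v e1) \<bullet> (U *v e1)" by (simp add: Usym)
  have Ue10: "U *v e1 \<noteq> 0" using U_inj e10 by blast
  have Bp: "e1 \<bullet> (U *v (U *v e1)) > 0" using B Ue10 by simp
  have "k = - 2 * (ff \<bullet> (U ** U *v e1)) / (e1 \<bullet> (U ** U *v e1))"
    using eq A Bp by (simp add: mv_mult field_simps)
  then show ?thesis using Uy Uyk unfolding d_def t_def by simp
qed

end

lemma mk_frame:
  assumes U: "sym_pos_def_matrix U" and e1: "norm e1 = 1" and v: "is_eigenvector U v" and ev: "e1 \<bullet> v = 0"
  shows "\<exists>lam. frame U e1 ((1/norm v) *\<^sub>R v) lam"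
proof -
  obtain c where c: "U *v v = c *\<^sub>R v" and v0: "v \<noteq> 0" using v unfolding is_eigenvector_def by blast
  have "frame U e1 ((1/norm v) *\<^sub>R v) c"
  proof (unfold_locales)
    show "transpose U = U" using U unfolding sym_pos_def_matrix_def by simp
    show "\<And>x. x \<noteq> 0 \<Longrightarrow> x \<bullet> (U *v x) > 0" using U unfolding sym_pos_def_matrix_def by simp
    show "norm e1 = 1" by fact
    show "norm ((1/norm v) *\<^sub>R v) = 1" using v0 by simp
    show "e1 \<bullet> ((1/norm v) *\<^sub>R v) = 0" using ev by simp
    show "U *v ((1/norm v) *\<^sub>R v) = c *\<^sub>R ((1/norm v) *\<^sub>R v)" by (simp add: mv_scale c)
  qed
  then show ?thesis by blast
qed

theorem proposition1:
  fixes U :: "real^3^3" and e1 :: "real^3"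
  assumes U: "sym_pos_def_matrix U"
    and e1: "norm e1 = 1"
    and Uh: "halfturn e1 ** U ** halfturn e1 \<noteq> U"
  shows "((\<exists>e2. norm e2 = 1 \<and> \<not> parallel e2 e1 \<and>
             halfturn e2 ** U ** halfturn e2 = halfturn e1 ** U ** halfturn e1)
          \<longleftrightarrow> (\<exists>v. is_eigenvector U v \<and> e1 \<bullet> v = 0))
    \<and> (\<forall>v. is_eigenvector U v \<and> e1 \<bullet> v = 0 \<longrightarrow>
          (\<forall>e2 e2'. norm e2 = 1 \<and> \<not> parallel e2 e1 \<and>
                 halfturn e2 ** U ** halfturn e2 = halfturn e1 ** U ** halfturn e1 \<and>
                 norm e2' = 1 \<and> \<not> parallel e2' e1 \<and>
                 halfturn e2' ** U ** halfturn e2' = halfturn e1 ** U ** halfturn e1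
             \<longrightarrow> (e2' = e2 \<or> e2' = - e2) \<and> e2 \<bullet> e1 = 0 \<and> e2 \<bullet> v = 0))
    \<and> (\<forall>v. is_eigenvector U v \<and> norm v = 1 \<and> e1 \<bullet> v = 0 \<longrightarrow>
          (let e2 = cross3 v e1;
               Ui = matrix_inv U;
               \<xi> = 2 * (e2 \<bullet> (Ui ** Ui *v e1)) / (e1 \<bullet> (Ui ** Ui *v e1));
               \<eta> = - 2 * (e2 \<bullet> (U ** U *v e1)) / (e1 \<bullet> (U ** U *v e1))
           in twin_solutions U (halfturn e1 ** U ** halfturn e1)
              = {dyad (\<xi> *\<^sub>R (U *v e2)) e1, dyad (\<eta> *\<^sub>R (U *v e1)) e2}))"
proof (intro conjI)
  have symU: "transpose U = U" using U unfolding sym_pos_def_matrix_def by simp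
  show "(\<exists>e2. norm e2 = 1 \<and> \<not> parallel e2 e1 \<and>
             halfturn e2 ** U ** halfturn e2 = halfturn e1 ** U ** halfturn e1)
          \<longleftrightarrow> (\<exists>v. is_eigenvector U v \<and> e1 \<bullet> v = 0)"
  proof
    assume "\<exists>e2. norm e2 = 1 \<and> \<not> parallel e2 e1 \<and>
             halfturn e2 ** U ** halfturn e2 = halfturn e1 ** U ** halfturn e1"
    then show "\<exists>v. is_eigenvector U v \<and> e1 \<bullet> v = 0" using fwd[OF symU e1] by blast
  next
    assume "\<exists>v. is_eigenvector U v \<and> e1 \<bullet> v = 0"
    then obtain v where v: "is_eigenvector U v" "e1 \<bullet> v = 0" by blast
    obtain lam where "frame U e1 ((1/norm v) *\<^sub>R v) lam" using mk_frame[OF U e1 v] by blast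
    then interpret fr: frame U e1 "(1/norm v) *\<^sub>R v" lam .
    have np: "\<not> parallel fr.ff e1"
    proof
      assume "parallel fr.ff e1"
      then obtain c where "fr.ff = c *\<^sub>R e1 \<or> e1 = c *\<^sub>R fr.ff" unfolding parallel_def by blast
      then show False
      proof
        assume h: "fr.ff = c *\<^sub>R e1"
        then have "c = 0" using fr.fe1(1) fr.e1e1 by simp
        then show False using h fr.ff by simp
      next
        assume h: "e1 = c *\<^sub>R fr.ff"
        have "e1 \<bullet> fr.ff = (c *\<^sub>R fr.ff) \<bullet> fr.ff" using arg_cong[where f="\<lambda>x. x \<bullet> fr.ff", OF h] by simp
        then have "c = 0" using fr.fe1(2) fr.ff by (simp only: inner_scaleR_left)
        then have "e1 = 0" using h by simp
        then show False using fr.e10 by simp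
      qed
    qed
    show "\<exists>e2. norm e2 = 1 \<and> \<not> parallel e2 e1 \<and>
             halfturn e2 ** U ** halfturn e2 = halfturn e1 ** U ** halfturn e1"
      using fr.ffn np fr.Uh_f by blast
  qed
  show "\<forall>v. is_eigenvector U v \<and> e1 \<bullet> v = 0 \<longrightarrow>
          (\<forall>e2 e2'. norm e2 = 1 \<and> \<not> parallel e2 e1 \<and>
                 halfturn e2 ** U ** halfturn e2 = halfturn e1 ** U ** halfturn e1 \<and>
                 norm e2' = 1 \<and> \<not> parallel e2' e1 \<and>
                 halfturn e2' ** U ** halfturn e2' = halfturn e1 ** U ** halfturn e1
             \<longrightarrow> (e2' = e2 \<or> e2' = - e2) \<and> e2 \<bullet> e1 = 0 \<and> e2 \<bullet> v = 0)"
  proof (intro allI impI)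
    fix v e2 e2'
    assume v: "is_eigenvector U v \<and> e1 \<bullet> v = 0"
    assume h: "norm e2 = 1 \<and> \<not> parallel e2 e1 \<and>
                 halfturn e2 ** U ** halfturn e2 = halfturn e1 ** U ** halfturn e1 \<and>
                 norm e2' = 1 \<and> \<not> parallel e2' e1 \<and>
                 halfturn e2' ** U ** halfturn e2' = halfturn e1 ** U ** halfturn e1"
    obtain lam where "frame U e1 ((1/norm v) *\<^sub>R v) lam" using mk_frame[OF U e1] v by blast
    then interpret fr: frame U e1 "(1/norm v) *\<^sub>R v" lam .
    have a: "e2 = fr.ff \<or> e2 = - fr.ff" using fr.part2[OF Uh] h by blast
    have b: "e2' = fr.ff \<or> e2' = - fr.ff" using fr.part2[OF Uh] h by blast
    have fv: "fr.ff \<bullet> v = 0"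
    proof -
      have v0: "v \<noteq> 0" using v unfolding is_eigenvector_def by simp
      have "fr.ff \<bullet> ((1/norm v) *\<^sub>R v) = 0" by (rule fr.fw(1))
      then show ?thesis using v0 by simp
    qed
    show "(e2' = e2 \<or> e2' = - e2) \<and> e2 \<bullet> e1 = 0 \<and> e2 \<bullet> v = 0"
      using a b fv fr.fe1(1) by auto
  qed
  show "\<forall>v. is_eigenvector U v \<and> norm v = 1 \<and> e1 \<bullet> v = 0 \<longrightarrow>
          (let e2 = cross3 v e1;
               Ui = matrix_inv U;
               \<xi> = 2 * (e2 \<bullet> (Ui ** Ui *v e1)) / (e1 \<bullet> (Ui ** Ui *v e1));
               \<eta> = - 2 * (e2 \<bullet> (U ** U *v e1)) / (e1 \<bullet> (U ** U *v e1))
           in twin_solutions U (halfturn e1 ** U ** halfturn e1)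
              = {dyad (\<xi> *\<^sub>R (U *v e2)) e1, dyad (\<eta> *\<^sub>R (U *v e1)) e2})"
  proof (intro allI impI)
    fix v
    assume v: "is_eigenvector U v \<and> norm v = 1 \<and> e1 \<bullet> v = 0"
    obtain lam where "frame U e1 ((1/norm v) *\<^sub>R v) lam" using mk_frame[OF U e1] v by blast
    then have "frame U e1 v lam" using v by simp
    then interpret fr: frame U e1 v lam .
    obtain R1 where R1: "rotation_matrix R1" and R1d: "R1 ** fr.Uh - U
       = dyad (2 *\<^sub>R ((1/((fr.Ui *v e1) \<bullet> (fr.Ui *v e1))) *\<^sub>R (fr.Ui *v e1) - U *v e1)) e1"
      using fr.typeI[OF e1] by blast
    obtain R2 where R2: "rotation_matrix R2" and R2d: "R2 ** fr.Uh - U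
       = dyad (2 *\<^sub>R ((1/((fr.Ui *v fr.ff) \<bullet> (fr.Ui *v fr.ff))) *\<^sub>R (fr.Ui *v fr.ff) - U *v fr.ff)) fr.ff"
      using fr.typeI[OF fr.ffn, unfolded fr.Uh_f] by blast
    note R1d' = R1d[unfolded fr.a1_eq] and R2d' = R2d[unfolded fr.a2_eq]
    show "let e2 = cross3 v e1;
               Ui = matrix_inv U;
               \<xi> = 2 * (e2 \<bullet> (Ui ** Ui *v e1)) / (e1 \<bullet> (Ui ** Ui *v e1));
               \<eta> = - 2 * (e2 \<bullet> (U ** U *v e1)) / (e1 \<bullet> (U ** U *v e1))
           in twin_solutions U (halfturn e1 ** U ** halfturn e1)
              = {dyad (\<xi> *\<^sub>R (U *v e2)) e1, dyad (\<eta> *\<^sub>R (U *v e1)) e2}"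
      unfolding Let_def
    proof (intro equalityI subsetI)
      fix D assume "D \<in> twin_solutions U fr.Uh"
      then obtain a n R where R: "rotation_matrix R" and Rd: "R ** fr.Uh - U = dyad a n"
        and D: "D = dyad a n" unfolding twin_solutions_def by blast
      show "D \<in> {dyad ((2 * (fr.ff \<bullet> (fr.Ui ** fr.Ui *v e1)) / (e1 \<bullet> (fr.Ui ** fr.Ui *v e1))) *\<^sub>R (U *v fr.ff)) e1,
                 dyad ((- 2 * (fr.ff \<bullet> (U ** U *v e1)) / (e1 \<bullet> (U ** U *v e1))) *\<^sub>R (U *v e1)) fr.ff}"
        using fr.part3sub[OF Uh R Rd R1 R1d' R2 R2d'] D by blast
    next
      fix D assume "D \<in> {dyad ((2 * (fr.ff \<bullet> (fr.Ui ** fr.Ui *v e1)) / (e1 \<bullet> (fr.Ui ** fr.Ui *v e1))) *\<^sub>R (U *v fr.ff)) e1,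
                 dyad ((- 2 * (fr.ff \<bullet> (U ** U *v e1)) / (e1 \<bullet> (U ** U *v e1))) *\<^sub>R (U *v e1)) fr.ff}"
      then show "D \<in> twin_solutions U fr.Uh"
        unfolding twin_solutions_def using R1 R1d' R2 R2d' by blast
    qed
  qed
qed

end
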